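(* If the triples $(p,q,r)$ and $(p',q',r')$ are dual to each other in the extended strange duality, then the matrix $A_{p,q,r}$ is conjugate in $SL(2;\mathbb Z)$ to the inverse $A_{p',q',r'}^{-1}$.
   Context: For positive integers $p,q,r$ let $A_{p,q,r}=\begin{pmatrix}r-1&-1\\1&0\end{pmatrix}\begin{pmatrix}q-1&-1\\1&0\end{pmatrix}\begin{pmatrix}p-1&-1\\1&0\end{pmatrix}$ (the monodromy of the link of the cusp singularity $x^p+y^q+z^r+axyz$, a $T^2$-bundle over the circle). The extended strange duality pairs of triples are: the self-dual triples $(2,3,7)$, $(2,4,6)$, $(3,3,6)$, $(2,5,5)$, $(3,4,5)$, $(4,4,4)$, and the pairs $(2,3,8)\leftrightarrow(2,4,5)$, $(2,3,9)\leftrightarrow(3,3,4)$, $(2,4,7)\leftrightarrow(3,3,5)$, $(2,5,6)\leftrightarrow(3,4,4)$. *)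

theory Defs
  imports "HOL-Analysis.Analysis"
begin

definition cusp_factor :: "int \<Rightarrow> int^2^2" where
  "cusp_factor n = vector [vector [n - 1, -1], vector [1, 0]]"

definition A_mat :: "nat \<Rightarrow> nat \<Rightarrow> nat \<Rightarrow> int^2^2" where
  "A_mat p q r = cusp_factor (int r) ** cusp_factor (int q) ** cusp_factor (int p)"

definition SL2Z_conjugate :: "int^2^2 \<Rightarrow> int^2^2 \<Rightarrow> bool" where
  "SL2Z_conjugate A B \<longleftrightarrow> (\<exists>P :: int^2^2. det P = 1 \<and> P ** A ** matrix_inv P = B)"

definition strange_dual_pairs :: "((nat \<times> nat \<times> nat) \<times> (nat \<times> nat \<times> nat)) set" where
  "strange_dual_pairs =
     {((2,3,7),(2,3,7)), ((2,4,6),(2,4,6)), ((3,3,6),(3,3,6)), ((2,5,5),(2,5,5)),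
      ((3,4,5),(3,4,5)), ((4,4,4),(4,4,4)),
      ((2,3,8),(2,4,5)), ((2,4,5),(2,3,8)),
      ((2,3,9),(3,3,4)), ((3,3,4),(2,3,9)),
      ((2,4,7),(3,3,5)), ((3,3,5),(2,4,7)),
      ((2,5,6),(3,4,4)), ((3,4,4),(2,5,6))}"

end

theory Submission imports Defs begin
definition mk :: "int \<Rightarrow> int \<Rightarrow> int \<Rightarrow> int \<Rightarrow> int^2^2" where
  "mk a b c d = vector [vector [a,b], vector [c,d]]"
lemma mk_nth: "mk a b c d $ 1 $ 1 = a" "mk a b c d $ 1 $ 2 = b" "mk a b c d $ 2 $ 1 = c" "mk a b c d $ 2 $ 2 = d"
  by (simp_all add: mk_def)
lemma mk_eq: "mk a b c d = mk a' b' c' d' \<longleftrightarrow> a = a' \<and> b = b' \<and> c = c' \<and> d = d'"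
  apply (rule iffI)
   apply (metis mk_nth)
  by simp
lemma mk_mult: "mk a b c d ** mk e f g h = mk (a*e+b*g) (a*f+b*h) (c*e+d*g) (c*f+d*h)"
  unfolding matrix_matrix_mult_def
  by (simp add: vec_eq_iff forall_2 sum_2 mk_nth)
lemma mk_one: "mat 1 = mk 1 0 0 1"
  by (simp add: vec_eq_iff forall_2 mk_nth mat_def)
lemma mk_det: "det (mk a b c d) = a*d - b*c"
  by (simp add: det_2 mk_nth)
lemma inv_unique:
  fixes X Y :: "int^2^2"
  assumes "X ** Y = mat 1" "Y ** X = mat 1"
  shows "matrix_inv X = Y"
proof -
  have ex: "X ** matrix_inv X = mat 1 \<and> matrix_inv X ** X = mat 1"
    unfolding matrix_inv_def by (rule someI[of _ Y]) (use assms in auto)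
  have "matrix_inv X = (Y ** X) ** matrix_inv X" using assms by (simp add: matrix_mul_lid)
  also have "\<dots> = Y ** (X ** matrix_inv X)" by (simp add: matrix_mul_assoc)
  also have "\<dots> = Y" using ex by (simp add: matrix_mul_rid)
  finally show ?thesis .
qed
lemma inv_mk: "a*d - b*c = 1 \<Longrightarrow> matrix_inv (mk a b c d) = mk d (-b) (-c) a"
  apply (rule inv_unique) by (simp_all add: mk_mult mk_one mk_eq algebra_simps)
lemma cf: "cusp_factor n = mk (n-1) (-1) 1 0" by (simp add: cusp_factor_def mk_def)
lemma conj_crit:
  assumes "P = mk a b c d" "a*d - b*c = 1" "P ** X = Y ** P"
  shows "SL2Z_conjugate X Y"
  unfolding SL2Z_conjugate_def
proof (intro exI conjI)
  show "det P = 1" using assms by (simp add: mk_det)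
  have i: "P ** matrix_inv P = mat 1" using assms inv_mk by (simp add: mk_mult mk_one algebra_simps)
  have "P ** X ** matrix_inv P = Y ** P ** matrix_inv P" using assms(3) by simp
  also have "\<dots> = Y" using i by (metis matrix_mul_assoc matrix_mul_rid)
  finally show "P ** X ** matrix_inv P = Y" .
qed
lemma step:
  assumes "A_mat p q r = mk a b c d" "A_mat p' q' r' = mk a' b' c' d'" "a'*d'-b'*c' = 1"
   "P = mk e f g h" "e*h-f*g = 1" "P ** mk a b c d = mk d' (-b') (-c') a' ** P"
  shows "SL2Z_conjugate (A_mat p q r) (matrix_inv (A_mat p' q' r'))"
  using assms conj_crit inv_mk by metis

theorem proposition4p1:
  fixes p q r p' q' r' :: nat
  assumes "((p, q, r), (p', q', r')) \<in> strange_dual_pairs"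
  shows "SL2Z_conjugate (A_mat p q r) (matrix_inv (A_mat p' q' r'))"
proof -
  have c: "((p, q, r), (p', q', r')) \<in> set [((2,3,7),(2,3,7)), ((2,4,6),(2,4,6)), ((3,3,6),(3,3,6)), ((2,5,5),(2,5,5)), ((3,4,5),(3,4,5)), ((4,4,4),(4,4,4)), ((2,3,8),(2,4,5)), ((2,4,5),(2,3,8)), ((2,3,9),(3,3,4)), ((3,3,4),(2,3,9)), ((2,4,7),(3,3,5)), ((3,3,5),(2,4,7)), ((2,5,6),(3,4,4)), ((3,4,4),(2,5,6))]"
    using assms unfolding strange_dual_pairs_def by simp
  have h0: "SL2Z_conjugate (A_mat 2 3 7) (matrix_inv (A_mat 2 3 7))"
    by (rule step[of "2" "3" "7" "5" "(-11)" "1" "(-2)" "2" "3" "7" "5" "(-11)" "1" "(-2)" "mk (-5) (13) (-2) (5)" "(-5)" "13" "(-2)" "5"]) (simp_all add: A_mat_def cf mk_mult)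
  have h1: "SL2Z_conjugate (A_mat 2 4 6) (matrix_inv (A_mat 2 4 6))"
    by (rule step[of "2" "4" "6" "9" "(-14)" "2" "(-3)" "2" "4" "6" "9" "(-14)" "2" "(-3)" "mk (-8) (13) (-5) (8)" "(-8)" "13" "(-5)" "8"]) (simp_all add: A_mat_def cf mk_mult)
  have h2: "SL2Z_conjugate (A_mat 3 3 6) (matrix_inv (A_mat 3 3 6))"
    by (rule step[of "3" "3" "6" "13" "(-9)" "3" "(-2)" "3" "3" "6" "13" "(-9)" "3" "(-2)" "mk (-7) (5) (-10) (7)" "(-7)" "5" "(-10)" "7"]) (simp_all add: A_mat_def cf mk_mult)
  have h3: "SL2Z_conjugate (A_mat 2 5 5) (matrix_inv (A_mat 2 5 5))"
    by (rule step[of "2" "5" "5" "11" "(-15)" "3" "(-4)" "2" "5" "5" "11" "(-15)" "3" "(-4)" "mk (-7) (10) (-5) (7)" "(-7)" "10" "(-5)" "7"]) (simp_all add: A_mat_def cf mk_mult)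
  have h4: "SL2Z_conjugate (A_mat 3 4 5) (matrix_inv (A_mat 3 4 5))"
    by (rule step[of "3" "4" "5" "18" "(-11)" "5" "(-3)" "3" "4" "5" "18" "(-11)" "5" "(-3)" "mk (-8) (5) (-13) (8)" "(-8)" "5" "(-13)" "8"]) (simp_all add: A_mat_def cf mk_mult)
  have h5: "SL2Z_conjugate (A_mat 4 4 4) (matrix_inv (A_mat 4 4 4))"
    by (rule step[of "4" "4" "4" "21" "(-8)" "8" "(-3)" "4" "4" "4" "21" "(-8)" "8" "(-3)" "mk (-5) (2) (-13) (5)" "(-5)" "2" "(-13)" "5"]) (simp_all add: A_mat_def cf mk_mult)
  have h6: "SL2Z_conjugate (A_mat 2 3 8) (matrix_inv (A_mat 2 4 5))"
    by (rule step[of "2" "3" "8" "6" "(-13)" "1" "(-2)" "2" "4" "5" "7" "(-11)" "2" "(-3)" "mk (-5) (12) (-3) (7)" "(-5)" "12" "(-3)" "7"]) (simp_all add: A_mat_def cf mk_mult)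
  have h7: "SL2Z_conjugate (A_mat 2 4 5) (matrix_inv (A_mat 2 3 8))"
    by (rule step[of "2" "4" "5" "7" "(-11)" "2" "(-3)" "2" "3" "8" "6" "(-13)" "1" "(-2)" "mk (-7) (12) (-3) (5)" "(-7)" "12" "(-3)" "5"]) (simp_all add: A_mat_def cf mk_mult)
  have h8: "SL2Z_conjugate (A_mat 2 3 9) (matrix_inv (A_mat 3 3 4))"
    by (rule step[of "2" "3" "9" "7" "(-15)" "1" "(-2)" "3" "3" "4" "7" "(-5)" "3" "(-2)" "mk (-3) (7) (-4) (9)" "(-3)" "7" "(-4)" "9"]) (simp_all add: A_mat_def cf mk_mult)
  have h9: "SL2Z_conjugate (A_mat 3 3 4) (matrix_inv (A_mat 2 3 9))"
    by (rule step[of "3" "3" "4" "7" "(-5)" "3" "(-2)" "2" "3" "9" "7" "(-15)" "1" "(-2)" "mk (-9) (7) (-4) (3)" "(-9)" "7" "(-4)" "3"]) (simp_all add: A_mat_def cf mk_mult)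
  have h10: "SL2Z_conjugate (A_mat 2 4 7) (matrix_inv (A_mat 3 3 5))"
    by (rule step[of "2" "4" "7" "11" "(-17)" "2" "(-3)" "3" "3" "5" "10" "(-7)" "3" "(-2)" "mk (-5) (8) (-7) (11)" "(-5)" "8" "(-7)" "11"]) (simp_all add: A_mat_def cf mk_mult)
  have h11: "SL2Z_conjugate (A_mat 3 3 5) (matrix_inv (A_mat 2 4 7))"
    by (rule step[of "3" "3" "5" "10" "(-7)" "3" "(-2)" "2" "4" "7" "11" "(-17)" "2" "(-3)" "mk (-11) (8) (-7) (5)" "(-11)" "8" "(-7)" "5"]) (simp_all add: A_mat_def cf mk_mult)
  have h12: "SL2Z_conjugate (A_mat 2 5 6) (matrix_inv (A_mat 3 4 4))"
    by (rule step[of "2" "5" "6" "14" "(-19)" "3" "(-4)" "3" "4" "4" "13" "(-8)" "5" "(-3)" "mk (-5) (7) (-8) (11)" "(-5)" "7" "(-8)" "11"]) (simp_all add: A_mat_def cf mk_mult)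
  have h13: "SL2Z_conjugate (A_mat 3 4 4) (matrix_inv (A_mat 2 5 6))"
    by (rule step[of "3" "4" "4" "13" "(-8)" "5" "(-3)" "2" "5" "6" "14" "(-19)" "3" "(-4)" "mk (-11) (7) (-8) (5)" "(-11)" "7" "(-8)" "5"]) (simp_all add: A_mat_def cf mk_mult)
  show ?thesis using c h0 h1 h2 h3 h4 h5 h6 h7 h8 h9 h10 h11 h12 h13 by auto
qed
end
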